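(* Let $f:(L_1,[\cdot,\cdot]_1,\alpha_1)\to(L_2,[\cdot,\cdot]_2,\alpha_2)$ be a surjective morphism of Hom-Lie algebras over a field $F$. If $\mu_A$ is a fuzzy Hom-Lie ideal of $L_1$, then the fuzzy set $\mu_{f(A)}$ on $L_2$, defined by $\mu_{f(A)}(y)=\sup_{x\in f^{-1}(y)}\mu_A(x)$ for $y\in f(L_1)$ and $\mu_{f(A)}(y)=0$ otherwise, is a fuzzy Hom-Lie ideal of $L_2$.
   Context: A Hom-Lie algebra over $F$ is a triple $(L,[\cdot,\cdot],\alpha)$ with $L$ an $F$-vector space, $\alpha:L\to L$ linear and $[\cdot,\cdot]$ bilinear, skew-symmetric, satisfying $[\alpha(x),[y,z]]+[\alpha(y),[z,x]]+[\alpha(z),[x,y]]=0$. A morphism of Hom-Lie algebras is a linear map $f$ with $f([x,y]_1)=[f(x),f(y)]_2$ and $f\circ\alpha_1=\alpha_2\circ f$. A fuzzy subset $\mu:L\to[0,1]$ is a fuzzy Hom-Lie ideal if for all $x,y\in L$, $c\in F$: $\mu(x+y)\ge\min\{\mu(x),\mu(y)\}$, $\mu(cx)\ge\mu(x)$, $\mu([x,y])\ge\max\{\mu(x),\mu(y)\}$, $\mu(\alpha(x))\ge\mu(x)$. *)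

theory Defs
  imports Complex_Main
begin

definition hom_lie_algebra ::
  "('f::field \<Rightarrow> 'a::ab_group_add \<Rightarrow> 'a) \<Rightarrow> ('a \<Rightarrow> 'a \<Rightarrow> 'a) \<Rightarrow> ('a \<Rightarrow> 'a) \<Rightarrow> bool" where
  "hom_lie_algebra scale br alpha \<longleftrightarrow>
     vector_space scale \<and>
     Vector_Spaces.linear scale scale alpha \<and>
     (\<forall>y. Vector_Spaces.linear scale scale (\<lambda>x. br x y)) \<and>
     (\<forall>x. Vector_Spaces.linear scale scale (\<lambda>y. br x y)) \<and>
     (\<forall>x y. br x y = - br y x) \<and>
     (\<forall>x y z. br (alpha x) (br y z) + br (alpha y) (br z x) + br (alpha z) (br x y) = 0)"

definition hom_lie_morphism ::
  "('f::field \<Rightarrow> 'a::ab_group_add \<Rightarrow> 'a) \<Rightarrow> ('a \<Rightarrow> 'a \<Rightarrow> 'a) \<Rightarrow> ('a \<Rightarrow> 'a) \<Rightarrow>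
   ('f \<Rightarrow> 'b::ab_group_add \<Rightarrow> 'b) \<Rightarrow> ('b \<Rightarrow> 'b \<Rightarrow> 'b) \<Rightarrow> ('b \<Rightarrow> 'b) \<Rightarrow> ('a \<Rightarrow> 'b) \<Rightarrow> bool" where
  "hom_lie_morphism s1 br1 a1 s2 br2 a2 f \<longleftrightarrow>
     Vector_Spaces.linear s1 s2 f \<and>
     (\<forall>x y. f (br1 x y) = br2 (f x) (f y)) \<and>
     f \<circ> a1 = a2 \<circ> f"

definition fuzzy_hom_lie_ideal ::
  "('f::field \<Rightarrow> 'a::ab_group_add \<Rightarrow> 'a) \<Rightarrow> ('a \<Rightarrow> 'a \<Rightarrow> 'a) \<Rightarrow> ('a \<Rightarrow> 'a) \<Rightarrow> ('a \<Rightarrow> real) \<Rightarrow> bool" where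
  "fuzzy_hom_lie_ideal scale br alpha \<mu> \<longleftrightarrow>
     (\<forall>x. 0 \<le> \<mu> x \<and> \<mu> x \<le> 1) \<and>
     (\<forall>x y. \<mu> (x + y) \<ge> min (\<mu> x) (\<mu> y)) \<and>
     (\<forall>c x. \<mu> (scale c x) \<ge> \<mu> x) \<and>
     (\<forall>x y. \<mu> (br x y) \<ge> max (\<mu> x) (\<mu> y)) \<and>
     (\<forall>x. \<mu> (alpha x) \<ge> \<mu> x)"

definition fuzzy_image :: "('a \<Rightarrow> 'b) \<Rightarrow> ('a \<Rightarrow> real) \<Rightarrow> 'b \<Rightarrow> real" where
  "fuzzy_image f \<mu> y = (if y \<in> range f then Sup (\<mu> ` (f -` {y})) else 0)"

end

theory Submission
  imports Defs
begin

lemma fib_ne: "surj f \<Longrightarrow> (\<mu>::'a\<Rightarrow>real) ` (f -` {y}) \<noteq> {}"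
proof -
  assume "surj f"
  then obtain x where "f x = y" by (metis surjD)
  thus ?thesis by auto
qed

lemma fib_bdd: "(\<forall>x. (\<mu>::'a\<Rightarrow>real) x \<le> 1) \<Longrightarrow> bdd_above (\<mu> ` (f -` {y}))"
  by (rule bdd_aboveI[where M=1]) auto

lemma fib_le: "(\<forall>x. (\<mu>::'a\<Rightarrow>real) x \<le> 1) \<Longrightarrow> f a = y \<Longrightarrow> \<mu> a \<le> Sup (\<mu> ` (f -` {y}))"
  by (rule cSup_upper) (auto intro: fib_bdd)

lemma fib_least: "surj f \<Longrightarrow> (\<And>a. f a = y \<Longrightarrow> (\<mu>::'a\<Rightarrow>real) a \<le> M) \<Longrightarrow> Sup (\<mu> ` (f -` {y})) \<le> M"
  by (rule cSup_least) (use fib_ne[of f \<mu> y] in auto)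

theorem theorem6p3:
  fixes s1 :: "'f::field \<Rightarrow> 'a::ab_group_add \<Rightarrow> 'a"
    and s2 :: "'f \<Rightarrow> 'b::ab_group_add \<Rightarrow> 'b"
    and br1 :: "'a \<Rightarrow> 'a \<Rightarrow> 'a" and a1 :: "'a \<Rightarrow> 'a"
    and br2 :: "'b \<Rightarrow> 'b \<Rightarrow> 'b" and a2 :: "'b \<Rightarrow> 'b"
    and f :: "'a \<Rightarrow> 'b" and \<mu> :: "'a \<Rightarrow> real"
  assumes "hom_lie_algebra s1 br1 a1"
    and "hom_lie_algebra s2 br2 a2"
    and "hom_lie_morphism s1 br1 a1 s2 br2 a2 f"
    and "surj f"
    and "fuzzy_hom_lie_ideal s1 br1 a1 \<mu>"
  shows "fuzzy_hom_lie_ideal s2 br2 a2 (fuzzy_image f \<mu>)"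
proof -
  define \<nu> where "\<nu> y = Sup (\<mu> ` (f -` {y}))" for y
  have fi: "fuzzy_image f \<mu> = \<nu>" using assms(4) by (auto simp: fuzzy_image_def \<nu>_def fun_eq_iff)
  have lin: "Vector_Spaces.linear s1 s2 f" and hbr: "\<And>x y. f (br1 x y) = br2 (f x) (f y)"
    and hal: "\<And>x. f (a1 x) = a2 (f x)"
    using assms(3) unfolding hom_lie_morphism_def by (auto simp: fun_eq_iff)
  have m01: "\<forall>x. \<mu> x \<le> 1" and m0: "\<And>x. 0 \<le> \<mu> x"
    and madd: "\<And>x y. \<mu> (x + y) \<ge> min (\<mu> x) (\<mu> y)"
    and msc: "\<And>c x. \<mu> (s1 c x) \<ge> \<mu> x"
    and mbr: "\<And>x y. \<mu> (br1 x y) \<ge> max (\<mu> x) (\<mu> y)"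
    and mal: "\<And>x. \<mu> (a1 x) \<ge> \<mu> x"
    using assms(5) unfolding fuzzy_hom_lie_ideal_def by auto
  have le: "\<And>a y. f a = y \<Longrightarrow> \<mu> a \<le> \<nu> y" unfolding \<nu>_def by (rule fib_le[OF m01])
  have least: "\<And>y M. (\<And>a. f a = y \<Longrightarrow> \<mu> a \<le> M) \<Longrightarrow> \<nu> y \<le> M"
    unfolding \<nu>_def by (rule fib_least[OF assms(4)])
  obtain g where g: "\<And>y. f (g y) = y" using assms(4) by (metis surj_f_inv_f)
  have b: "0 \<le> \<nu> y \<and> \<nu> y \<le> 1" for y
  proof -
    have "\<mu> (g y) \<le> \<nu> y" by (rule le[OF g])
    moreover have "\<nu> y \<le> 1" by (rule least) (use m01 in auto)
    ultimately show ?thesis using m0[of "g y"] by linarith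
  qed
  have add: "\<nu> (x + y) \<ge> min (\<nu> x) (\<nu> y)" for x y
  proof (rule ccontr)
    assume "\<not> ?thesis"
    hence c1: "\<nu> (x+y) < \<nu> x" and c2: "\<nu> (x+y) < \<nu> y" by auto
    have ex: "\<exists>a. f a = z \<and> \<nu> (x+y) < \<mu> a" if cz: "\<nu> (x+y) < \<nu> z" for z
    proof (rule ccontr)
      assume "\<not> ?thesis"
      hence "\<nu> z \<le> \<nu> (x+y)" by (intro least) (auto simp: not_less)
      thus False using cz by linarith
    qed
    obtain a where a: "f a = x" "\<nu> (x+y) < \<mu> a" using ex[OF c1] by blast
    obtain b where b: "f b = y" "\<nu> (x+y) < \<mu> b" using ex[OF c2] by blast
    have "f (a + b) = x + y" using a b module_hom.add[OF lin[unfolded linear_iff_module_hom]] by simp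
    hence "\<mu> (a+b) \<le> \<nu> (x+y)" by (rule le)
    thus False using madd[of a b] a b by linarith
  qed
  have sc: "\<nu> (s2 c y) \<ge> \<nu> y" for c y
  proof (rule least)
    fix a assume "f a = y"
    hence "f (s1 c a) = s2 c y" using module_hom.scale[OF lin[unfolded linear_iff_module_hom]] by simp
    thus "\<mu> a \<le> \<nu> (s2 c y)" using le msc order_trans by blast
  qed
  have br: "\<nu> (br2 x y) \<ge> max (\<nu> x) (\<nu> y)" for x y
  proof -
    have "\<nu> x \<le> \<nu> (br2 x y)"
    proof (rule least)
      fix a assume "f a = x"
      hence "f (br1 a (g y)) = br2 x y" using hbr g by simp
      hence "\<mu> (br1 a (g y)) \<le> \<nu> (br2 x y)" by (rule le)
      thus "\<mu> a \<le> \<nu> (br2 x y)" using mbr[of a "g y"] by linarith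
    qed
    moreover have "\<nu> y \<le> \<nu> (br2 x y)"
    proof (rule least)
      fix a assume "f a = y"
      hence "f (br1 (g x) a) = br2 x y" using hbr g by simp
      hence "\<mu> (br1 (g x) a) \<le> \<nu> (br2 x y)" by (rule le)
      thus "\<mu> a \<le> \<nu> (br2 x y)" using mbr[of "g x" a] by linarith
    qed
    ultimately show ?thesis by simp
  qed
  have al: "\<nu> (a2 x) \<ge> \<nu> x" for x
  proof (rule least)
    fix a assume "f a = x"
    hence "f (a1 a) = a2 x" using hal by simp
    thus "\<mu> a \<le> \<nu> (a2 x)" using le mal order_trans by blast
  qed
  show ?thesis unfolding fi fuzzy_hom_lie_ideal_def using b add sc br al by blast
qed

end
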